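(* Let $X$ be an $n$-dimensional toric Fano variety with fan $\Sigma_X$. Suppose that for every generator $x\in G(\Sigma_X)$ there are at most two primitive collections of order two containing $x$, and if there are exactly two, they are $\{x,-x\}$ and $\{x,y\}$ with $-y\notin G(\Sigma_X)$ and $-x-y\notin G(\Sigma_X)$. Then $\Sigma_X$ has at most $\frac{3}{4}f_0$ primitive collections of order two, i.e. $\binom{f_0}{2}-f_1\leq\frac34 f_0$, where $f_0$ is the number of rays and $f_1$ the number of $2$-dimensional cones of $\Sigma_X$.
   Context: $X$ is a smooth projective toric variety with ample anticanonical divisor, fan $\Sigma_X$, primitive ray generators $G(\Sigma_X)$. A primitive collection is a set of generators not spanning a cone of $\Sigma_X$ while every proper subset does; its order is its cardinality. (A set of two generators is a primitive collection exactly when they do not span a cone of $\Sigma_X$.) *)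

theory Defs
  imports "HOL-Analysis.Analysis"
begin

text \<open>A smooth toric Fano variety of dimension n = CARD('n) is encoded by its set V of
primitive ray generators G(Sigma_X), viewed as lattice points in real^'n.  The fan Sigma_X
is the face fan of the smooth Fano polytope conv V: V is finite, consists of lattice points,
is exactly the vertex set of conv V, the origin lies in the interior of conv V, and the
vertices on every facet of conv V form a Z-basis of the lattice Z^n.\<close>

definition lattice_point :: "real ^ 'n \<Rightarrow> bool" where
  "lattice_point x \<longleftrightarrow> (\<forall>i. x $ i \<in> \<int>)"

definition is_Z_basis :: "(real ^ 'n) set \<Rightarrow> bool" where
  "is_Z_basis B \<longleftrightarrow> finite B \<and> card B = CARD('n) \<and> (\<forall>b\<in>B. lattice_point b) \<and>
     (\<forall>x. lattice_point x \<longrightarrow> (\<exists>c. (\<forall>b\<in>B. c b \<in> \<int>) \<and> x = (\<Sum>b\<in>B. c b *\<^sub>R b)))"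

definition smooth_Fano_generators :: "(real ^ 'n) set \<Rightarrow> bool" where
  "smooth_Fano_generators V \<longleftrightarrow>
     finite V \<and> (\<forall>v\<in>V. lattice_point v) \<and>
     (\<forall>v\<in>V. v extreme_point_of (convex hull V)) \<and>
     0 \<in> interior (convex hull V) \<and>
     (\<forall>F. F facet_of (convex hull V) \<longrightarrow> is_Z_basis (V \<inter> F))"

text \<open>A subset S of the generators spans a cone of the (face) fan iff it lies on a proper
face, i.e. (the fan being simplicial) in a common facet of conv V.\<close>

definition spans_cone :: "(real ^ 'n) set \<Rightarrow> (real ^ 'n) set \<Rightarrow> bool" where
  "spans_cone V S \<longleftrightarrow> S \<subseteq> V \<and> (\<exists>F. F facet_of (convex hull V) \<and> S \<subseteq> F)"

definition primitive_collection :: "(real ^ 'n) set \<Rightarrow> (real ^ 'n) set \<Rightarrow> bool" where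
  "primitive_collection V S \<longleftrightarrow> S \<subseteq> V \<and> \<not> spans_cone V S \<and>
     (\<forall>T. T \<subset> S \<longrightarrow> spans_cone V T)"

definition prim_coll2 :: "(real ^ 'n) set \<Rightarrow> (real ^ 'n) set set" where
  "prim_coll2 V = {S. primitive_collection V S \<and> card S = 2}"

definition f0 :: "(real ^ 'n) set \<Rightarrow> nat" where
  "f0 V = card V"

definition f1 :: "(real ^ 'n) set \<Rightarrow> nat" where
  "f1 V = card {S. card S = 2 \<and> spans_cone V S}"

end

theory Submission
  imports Defs
begin

lemma vertex_in_facet:
  fixes V :: "(real ^ 'n) set"
  assumes "smooth_Fano_generators V" "v \<in> V"
  shows "\<exists>F. F facet_of (convex hull V) \<and> v \<in> F"
proof -
  have fin: "finite V" and ext: "v extreme_point_of (convex hull V)"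
    and int: "0 \<in> interior (convex hull V)"
    using assms unfolding smooth_Fano_generators_def by auto
  have poly: "polyhedron (convex hull V)"
    using fin by (intro polytope_imp_polyhedron) (auto simp: polytope_def)
  have face: "{v} face_of convex hull V" using ext by (simp add: face_of_singleton)
  have ne: "{v} \<noteq> convex hull V" using int by (metis empty_iff interior_singleton)
  obtain F where "F facet_of convex hull V" "{v} \<subseteq> F"
    using face_of_polyhedron_subset_facet[OF poly face _ ne] by auto
  then show ?thesis by auto
qed

lemma small_spans:
  fixes V :: "(real ^ 'n) set"
  assumes "smooth_Fano_generators V" "T \<subseteq> V" "card T \<le> 1" "finite T" "V \<noteq> {}"
  shows "spans_cone V T"
proof (cases "T = {}")
  case True
  obtain v where "v \<in> V" using assms(5) by auto
  then show ?thesis using vertex_in_facet[OF assms(1)] True unfolding spans_cone_def by auto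
next
  case False
  then obtain v where "T = {v}" using assms(3,4)
    by (metis card_0_eq card_1_singletonE le_antisym less_one not_le)
  then show ?thesis using vertex_in_facet[OF assms(1)] assms(2) unfolding spans_cone_def by auto
qed

theorem lemma3p4:
  fixes V :: "(real ^ 'n) set"
  assumes "smooth_Fano_generators V"
    and "\<forall>x\<in>V. card {S \<in> prim_coll2 V. x \<in> S} \<le> 2"
    and "\<forall>x\<in>V. card {S \<in> prim_coll2 V. x \<in> S} = 2 \<longrightarrow>
           (\<exists>y. {S \<in> prim_coll2 V. x \<in> S} = {{x, -x}, {x, y}} \<and> -y \<notin> V \<and> -x - y \<notin> V)"
  shows "real (card (prim_coll2 V)) \<le> 3/4 * real (f0 V)
       \<and> real (f0 V choose 2) - real (f1 V) \<le> 3/4 * real (f0 V)"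
proof -
  define P where "P = prim_coll2 V"
  define D where "D x = {S \<in> P. x \<in> S}" for x
  have fin: "finite V" using assms(1) unfolding smooth_Fano_generators_def by auto
  have PV: "P \<subseteq> Pow V" unfolding P_def prim_coll2_def primitive_collection_def by auto
  have finP: "finite P" using PV fin by (meson finite_Pow_iff finite_subset)
  have c2: "\<And>S. S \<in> P \<Longrightarrow> card S = 2" unfolding P_def prim_coll2_def by auto
  have finD: "finite (D x)" for x using finP unfolding D_def by auto
  have le2: "\<And>x. x \<in> V \<Longrightarrow> card (D x) \<le> 2" using assms(2) unfolding D_def P_def by auto
  have sumD: "(\<Sum>x\<in>V. card (D x)) = 2 * card P"
    unfolding D_def
  proof (rule sum_multicount[OF fin finP])
    show "\<forall>S\<in>P. card {x \<in> V. x \<in> S} = 2"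
    proof
      fix S assume "S \<in> P"
      then have "{x \<in> V. x \<in> S} = S" using PV by auto
      then show "card {x \<in> V. x \<in> S} = 2" using c2 \<open>S \<in> P\<close> by simp
    qed
  qed
  define A1 where "A1 = {x \<in> V. card (D x) = 1}"
  define A2 where "A2 = {x \<in> V. card (D x) = 2}"
  have partner: "\<exists>y. {x, y} \<in> P \<and> y \<in> A1" if "x \<in> A2" for x
  proof -
    have xV: "x \<in> V" using that unfolding A2_def by auto
    have "card (D x) = 2" using that unfolding A2_def by auto
    then obtain y where y: "D x = {{x, -x}, {x, y}}" "-y \<notin> V"
      using assms(3) xV unfolding D_def P_def by blast
    have xyP: "{x, y} \<in> P" using y unfolding D_def by auto
    then have yV: "y \<in> V" using PV by auto
    have "{x,y} \<in> D y" using xyP unfolding D_def by auto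
    then have "card (D y) \<noteq> 0" using finD by auto
    moreover have "card (D y) \<noteq> 2"
    proof
      assume "card (D y) = 2"
      then obtain z where "D y = {{y, -y}, {y, z}}"
        using assms(3) yV unfolding D_def P_def by blast
      then have "{y, -y} \<in> P" unfolding D_def by auto
      then show False using PV y(2) by auto
    qed
    ultimately have "card (D y) = 1" using le2[OF yV] by linarith
    then show ?thesis using xyP yV unfolding A1_def by auto
  qed
  define f where "f x = (SOME y. {x, y} \<in> P \<and> y \<in> A1)" for x
  have fP: "{x, f x} \<in> P \<and> f x \<in> A1" if "x \<in> A2" for x
    unfolding f_def using someI_ex[OF partner[OF that]] .
  have injf: "inj_on f A2"
  proof
    fix x x' assume xx: "x \<in> A2" "x' \<in> A2" "f x = f x'"
    let ?y = "f x"
    have a: "{x, ?y} \<in> D ?y" "{x', ?y} \<in> D ?y" using fP[OF xx(1)] fP[OF xx(2)] xx(3)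
      unfolding D_def by auto
    have "card (D ?y) = 1" using fP[OF xx(1)] unfolding A1_def by auto
    then obtain T where "D ?y = {T}" by (meson card_1_singletonE)
    then have eq: "{x, ?y} = {x', ?y}" using a by auto
    have "card {x, ?y} = 2" "card {x', ?y} = 2" using c2 fP[OF xx(1)] fP[OF xx(2)] xx(3) by auto
    then have "x \<noteq> ?y" "x' \<noteq> ?y" by auto
    then show "x = x'" using eq by (metis insert_iff doubleton_eq_iff)
  qed
  have cardA: "card A2 \<le> card A1"
    by (rule card_inj_on_le[OF injf]) (use fP in \<open>auto simp: A1_def fin\<close>)
  have pt: "2 * card (D x) + (if x \<in> A1 then 1 else 0) \<le> 3 + (if x \<in> A2 then 1 else 0)"
    if "x \<in> V" for x
    using le2[OF that] that unfolding A1_def A2_def by auto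
  have "(\<Sum>x\<in>V. 2 * card (D x) + (if x \<in> A1 then 1 else 0))
        \<le> (\<Sum>x\<in>V. 3 + (if x \<in> A2 then 1 else (0::nat)))"
    by (rule sum_mono) (use pt in auto)
  moreover have "(\<Sum>x\<in>V. (if x \<in> A1 then 1 else (0::nat))) = card A1"
    using fin by (simp add: sum.If_cases A1_def Int_absorb1 Int_def)
  moreover have "(\<Sum>x\<in>V. (if x \<in> A2 then 1 else (0::nat))) = card A2"
    using fin by (simp add: sum.If_cases A2_def Int_def)
  ultimately have "2 * (\<Sum>x\<in>V. card (D x)) + card A1 \<le> 3 * card V + card A2"
    by (simp add: sum.distrib sum_distrib_left[symmetric] mult.commute sum_distrib_right[symmetric])
  then have main: "4 * card P \<le> 3 * card V" using sumD cardA by linarith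
  then have A: "real (card P) \<le> 3/4 * real (card V)" by linarith
  have Vne: "V \<noteq> {}"
    using assms(1) unfolding smooth_Fano_generators_def by auto
  have sub: "{S. S \<subseteq> V \<and> card S = 2} \<subseteq> {S. card S = 2 \<and> spans_cone V S} \<union> P"
  proof
    fix S assume S: "S \<in> {S. S \<subseteq> V \<and> card S = 2}"
    show "S \<in> {S. card S = 2 \<and> spans_cone V S} \<union> P"
    proof (cases "spans_cone V S")
      case True then show ?thesis using S by auto
    next
      case False
      have "spans_cone V T" if "T \<subset> S" for T
      proof -
        have "finite S" using S by (auto intro: card_ge_0_finite)
        then have "card T < card S" "finite T" using that psubset_card_mono finite_subset by auto
        then show ?thesis using small_spans[OF assms(1) _ _ _ Vne] that S by auto
      qed
      then show ?thesis using S False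
        unfolding P_def prim_coll2_def primitive_collection_def by auto
    qed
  qed
  have fin2: "finite {S. card S = 2 \<and> spans_cone V S}"
    by (rule finite_subset[of _ "Pow V"]) (use fin in \<open>auto simp: spans_cone_def\<close>)
  have "card V choose 2 \<le> card ({S. card S = 2 \<and> spans_cone V S} \<union> P)"
    using card_mono[OF _ sub] fin2 finP n_subsets[OF fin, of 2] by auto
  also have "\<dots> \<le> f1 V + card P" unfolding f1_def by (rule card_Un_le)
  finally have "card V choose 2 \<le> f1 V + card P" .
  then have B: "real (card V choose 2) - real (f1 V) \<le> real (card P)" by linarith
  show ?thesis using A B unfolding P_def f0_def by linarith
qed

end
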